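(* Let $P=(X,D,C)$ be a St-CSP and suppose $(C,\emptyset)\rightsquigarrow\cdots\rightsquigarrow(C_0,C_1)$ by applications of rules (R1)–(R3), introducing the set $Y$ of auxiliary variables. Let $P'$ be the St-CSP with variables $X\cup Y$, the same domains as $P$ on $X$, domain $\mathbb{Z}^\omega$ (all integer streams) for each variable in $Y$, and constraint set $C_0\cup C_1$. Then an assignment $A$ of the variables $X$ is a solution of $P$ if and only if $A$ extends to a solution of $P'$; that is, $sol(P)$ equals the projection of $sol(P')$ onto $X$.
   Context: Streams are functions $\mathbb{N}_0\to\mathbb{Z}$; for a finite alphabet $\Sigma$, $\Sigma^\omega$ is the set of streams with values in $\Sigma$. A St-CSP is a triple $(X,D,C)$ with a finite set $X$ of stream variables, domains $D(x)=\Sigma(x)^\omega$, and a finite set $C$ of stream constraints; $sol(P)$ is the set of assignments of streams in the domains to the variables satisfying all constraints. Stream expressions are built from stream variables and constant streams using pointwise operators (arithmetic, relational operators returning $0/1$ streams, Boolean and/or/not, if-then-else, each applied pointwise via fixed total functions on integers) and the temporal operators $\mathtt{first}$ ($(\mathtt{first}\,a)(i)=a(0)$), $\mathtt{next}$ ($(\mathtt{next}\,a)(i)=a(i+1)$) and $\mathtt{fby}$ ($(a\ \mathtt{fby}\ b)(0)=a(0)$, $(a\ \mathtt{fby}\ b)(i)=b(i-1)$ for $i\ge1$). A stream constraint is one of: $e_1\,R\,e_2$ with $R\in\{<,\le,==,\ge,>,\ne\}$ (satisfied iff $R$ holds at every time point), $e_1\ \mathtt{->}\ e_2$ (satisfied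 iff for all $i$, $e_1(i)\ne0$ implies $e_2(i)\ne0$), or $e_1\ \mathtt{until}\ e_2$ (satisfied iff there is $i\ge0$ with $e_1(j)\ne0$ for all $j<i$ and $e_2(i)\ne0$); $\mathtt{until}$ occurs only as the outermost constructor. A constraint context $c[\_]$ is a constraint with one expression occurrence replaced by a placeholder; $c[e]$ denotes substitution. The rewriting rules on pairs $(C_0,C_1)$ of constraint sets are (all $x_k$ fresh variables): (R1) $(C_0\cup\{c[\mathtt{next}\ e]\},C_1)\rightsquigarrow(C_0\cup\{c[x_1],\ x_2==e\},\ C_1\cup\{x_1==\mathtt{next}\ x_2\})$; (R2) $(C_0\cup\{c[e_1\ \mathtt{fby}\ e_2]\},C_1)\rightsquigarrow(C_0\cup\{c[x_1],\ x_2==e_1,\ x_3==e_2\},\ C_1\cup\{\mathtt{first}\ x_1==\mathtt{first}\ x_2,\ x_3==\mathtt{next}\ x_1\})$; (R3) $(C_0\cup\{e_1\ \mathtt{until}\ e_2\},C_1)\rightsquigarrow(C_0\cup\{x_1==e_1,\ x_2==e_2\},\ C_1\cup\{x_1\ \mathtt{until}\ x_2\})$. *)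

theory Defs
  imports Main
begin

type_synonym stream = "nat \<Rightarrow> int"

text \<open>Pointwise operators (arithmetic, relational, Boolean,
if-then-else) are each given by a fixed total function on integers applied pointwise;
we allow arbitrary unary, binary and ternary such functions.\<close>
datatype 'v sexpr =
    Var 'v
  | Const stream
  | Op1 "int \<Rightarrow> int" "'v sexpr"
  | Op2 "int \<Rightarrow> int \<Rightarrow> int" "'v sexpr" "'v sexpr"
  | Op3 "int \<Rightarrow> int \<Rightarrow> int \<Rightarrow> int" "'v sexpr" "'v sexpr" "'v sexpr"
  | First "'v sexpr"
  | Next "'v sexpr"
  | Fby "'v sexpr" "'v sexpr"

datatype rel = Lt | Le | Eq | Ge | Gt | Ne

datatype 'v sconstr =
    Rel rel "'v sexpr" "'v sexpr"
  | Impl "'v sexpr" "'v sexpr"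
  | Until "'v sexpr" "'v sexpr"

fun eval :: "('v \<Rightarrow> stream) \<Rightarrow> 'v sexpr \<Rightarrow> stream" where
  "eval A (Var x) = A x"
| "eval A (Const s) = s"
| "eval A (Op1 f a) = (\<lambda>i. f (eval A a i))"
| "eval A (Op2 f a b) = (\<lambda>i. f (eval A a i) (eval A b i))"
| "eval A (Op3 f a b c) = (\<lambda>i. f (eval A a i) (eval A b i) (eval A c i))"
| "eval A (First a) = (\<lambda>i. eval A a 0)"
| "eval A (Next a) = (\<lambda>i. eval A a (Suc i))"
| "eval A (Fby a b) = (\<lambda>i. if i = 0 then eval A a 0 else eval A b (i - 1))"

fun rel_sem :: "rel \<Rightarrow> int \<Rightarrow> int \<Rightarrow> bool" where
  "rel_sem Lt a b = (a < b)"
| "rel_sem Le a b = (a \<le> b)"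
| "rel_sem Eq a b = (a = b)"
| "rel_sem Ge a b = (a \<ge> b)"
| "rel_sem Gt a b = (a > b)"
| "rel_sem Ne a b = (a \<noteq> b)"

fun sat :: "('v \<Rightarrow> stream) \<Rightarrow> 'v sconstr \<Rightarrow> bool" where
  "sat A (Rel R a b) = (\<forall>i. rel_sem R (eval A a i) (eval A b i))"
| "sat A (Impl a b) = (\<forall>i. eval A a i \<noteq> 0 \<longrightarrow> eval A b i \<noteq> 0)"
| "sat A (Until a b) = (\<exists>i. (\<forall>j<i. eval A a j \<noteq> 0) \<and> eval A b i \<noteq> 0)"

fun vars_e :: "'v sexpr \<Rightarrow> 'v set" where
  "vars_e (Var x) = {x}"
| "vars_e (Const s) = {}"
| "vars_e (Op1 f a) = vars_e a"
| "vars_e (Op2 f a b) = vars_e a \<union> vars_e b"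
| "vars_e (Op3 f a b c) = vars_e a \<union> vars_e b \<union> vars_e c"
| "vars_e (First a) = vars_e a"
| "vars_e (Next a) = vars_e a"
| "vars_e (Fby a b) = vars_e a \<union> vars_e b"

fun vars_c :: "'v sconstr \<Rightarrow> 'v set" where
  "vars_c (Rel R a b) = vars_e a \<union> vars_e b"
| "vars_c (Impl a b) = vars_e a \<union> vars_e b"
| "vars_c (Until a b) = vars_e a \<union> vars_e b"

definition vars_cs :: "'v sconstr set \<Rightarrow> 'v set" where
  "vars_cs C = (\<Union>c\<in>C. vars_c c)"

datatype 'v ectx =
    Hole
  | COp1 "int \<Rightarrow> int" "'v ectx"
  | COp2L "int \<Rightarrow> int \<Rightarrow> int" "'v ectx" "'v sexpr"
  | COp2R "int \<Rightarrow> int \<Rightarrow> int" "'v sexpr" "'v ectx"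
  | COp3A "int \<Rightarrow> int \<Rightarrow> int \<Rightarrow> int" "'v ectx" "'v sexpr" "'v sexpr"
  | COp3B "int \<Rightarrow> int \<Rightarrow> int \<Rightarrow> int" "'v sexpr" "'v ectx" "'v sexpr"
  | COp3C "int \<Rightarrow> int \<Rightarrow> int \<Rightarrow> int" "'v sexpr" "'v sexpr" "'v ectx"
  | CFirst "'v ectx"
  | CNext "'v ectx"
  | CFbyL "'v ectx" "'v sexpr"
  | CFbyR "'v sexpr" "'v ectx"

fun efill :: "'v ectx \<Rightarrow> 'v sexpr \<Rightarrow> 'v sexpr" where
  "efill Hole e = e"
| "efill (COp1 f k) e = Op1 f (efill k e)"
| "efill (COp2L f k b) e = Op2 f (efill k e) b"
| "efill (COp2R f a k) e = Op2 f a (efill k e)"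
| "efill (COp3A f k b c) e = Op3 f (efill k e) b c"
| "efill (COp3B f a k c) e = Op3 f a (efill k e) c"
| "efill (COp3C f a b k) e = Op3 f a b (efill k e)"
| "efill (CFirst k) e = First (efill k e)"
| "efill (CNext k) e = Next (efill k e)"
| "efill (CFbyL k b) e = Fby (efill k e) b"
| "efill (CFbyR a k) e = Fby a (efill k e)"

text \<open>Constraint contexts c[_]: a constraint with one expression occurrence replaced by a hole.\<close>
datatype 'v cctx =
    CRelL rel "'v ectx" "'v sexpr"
  | CRelR rel "'v sexpr" "'v ectx"
  | CImplL "'v ectx" "'v sexpr"
  | CImplR "'v sexpr" "'v ectx"
  | CUntilL "'v ectx" "'v sexpr"
  | CUntilR "'v sexpr" "'v ectx"

fun cfill :: "'v cctx \<Rightarrow> 'v sexpr \<Rightarrow> 'v sconstr" where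
  "cfill (CRelL R k b) e = Rel R (efill k e) b"
| "cfill (CRelR R a k) e = Rel R a (efill k e)"
| "cfill (CImplL k b) e = Impl (efill k e) b"
| "cfill (CImplR a k) e = Impl a (efill k e)"
| "cfill (CUntilL k b) e = Until (efill k e) b"
| "cfill (CUntilR a k) e = Until a (efill k e)"

text \<open>One rewriting step on states (C0, C1, Y), where Y records the auxiliary variables
introduced so far; X is the variable set of the original problem.\<close>
definition fresh :: "'v set \<Rightarrow> 'v set \<Rightarrow> 'v sconstr set \<Rightarrow> 'v sconstr set \<Rightarrow> 'v \<Rightarrow> bool" where
  "fresh X Y C0 C1 x \<longleftrightarrow> x \<notin> X \<and> x \<notin> Y \<and> x \<notin> vars_cs C0 \<and> x \<notin> vars_cs C1"

inductive rw_step :: "'v set \<Rightarrow> ('v sconstr set \<times> 'v sconstr set \<times> 'v set)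
      \<Rightarrow> ('v sconstr set \<times> 'v sconstr set \<times> 'v set) \<Rightarrow> bool" for X where
  R1: "\<lbrakk> cfill c (Next e) \<in> C0; fresh X Y C0 C1 x1; fresh X Y C0 C1 x2; x1 \<noteq> x2 \<rbrakk> \<Longrightarrow>
       rw_step X (C0, C1, Y)
         ((C0 - {cfill c (Next e)}) \<union> {cfill c (Var x1), Rel Eq (Var x2) e},
          C1 \<union> {Rel Eq (Var x1) (Next (Var x2))},
          Y \<union> {x1, x2})"
| R2: "\<lbrakk> cfill c (Fby e1 e2) \<in> C0; fresh X Y C0 C1 x1; fresh X Y C0 C1 x2; fresh X Y C0 C1 x3;
        x1 \<noteq> x2; x1 \<noteq> x3; x2 \<noteq> x3 \<rbrakk> \<Longrightarrow>
       rw_step X (C0, C1, Y)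
         ((C0 - {cfill c (Fby e1 e2)}) \<union> {cfill c (Var x1), Rel Eq (Var x2) e1, Rel Eq (Var x3) e2},
          C1 \<union> {Rel Eq (First (Var x1)) (First (Var x2)), Rel Eq (Var x3) (Next (Var x1))},
          Y \<union> {x1, x2, x3})"
| R3: "\<lbrakk> Until e1 e2 \<in> C0; fresh X Y C0 C1 x1; fresh X Y C0 C1 x2; x1 \<noteq> x2 \<rbrakk> \<Longrightarrow>
       rw_step X (C0, C1, Y)
         ((C0 - {Until e1 e2}) \<union> {Rel Eq (Var x1) e1, Rel Eq (Var x2) e2},
          C1 \<union> {Until (Var x1) (Var x2)},
          Y \<union> {x1, x2})"

text \<open>St-CSP: variables X, alphabets Sg (domain D(x) = Sg(x)^omega), constraints C.
An assignment is a function on all variables; only its values on the problem variables matter.\<close>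
definition in_domain :: "'v set \<Rightarrow> ('v \<Rightarrow> int set) \<Rightarrow> ('v \<Rightarrow> stream) \<Rightarrow> bool" where
  "in_domain X Sg A \<longleftrightarrow> (\<forall>x\<in>X. \<forall>i. A x i \<in> Sg x)"

definition is_sol :: "'v set \<Rightarrow> ('v \<Rightarrow> int set) \<Rightarrow> 'v sconstr set \<Rightarrow> ('v \<Rightarrow> stream) \<Rightarrow> bool" where
  "is_sol X Sg C A \<longleftrightarrow> in_domain X Sg A \<and> (\<forall>c\<in>C. sat A c)"

end

theory Submission
  imports Defs
begin

lemma eval_cong: "(\<forall>x\<in>vars_e e. A x = B x) \<Longrightarrow> eval A e = eval B e"
  by (induction e) auto

lemma sat_cong: "(\<forall>x\<in>vars_c c. A x = B x) \<Longrightarrow> sat A c = sat B c"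
  by (cases c) (auto simp: eval_cong[of _ A B])

lemma efill_eval: "eval B e1 = eval B e2 \<Longrightarrow> eval B (efill k e1) = eval B (efill k e2)"
  by (induction k) auto

lemma cfill_sat: "eval B e1 = eval B e2 \<Longrightarrow> sat B (cfill c e1) = sat B (cfill c e2)"
  by (cases c) (auto simp: efill_eval[of B e1 e2])

lemma vars_efill: "vars_e e \<subseteq> vars_e (efill k e)"
  by (induction k) auto

lemma vars_cfill: "vars_e e \<subseteq> vars_c (cfill c e)"
  using vars_efill[of e] by (cases c) force+

lemma fresh_D: "fresh X Y C0 C1 x \<Longrightarrow> x \<notin> X \<and> (\<forall>d\<in>C0\<union>C1. x \<notin> vars_c d)"
  unfolding fresh_def vars_cs_def by blast

lemma rw_step_inv:
  assumes "rw_step X (C0,C1,Y) (C0',C1',Y')"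
  shows "\<exists>N. Y' = Y \<union> N \<and> N \<inter> X = {} \<and> (\<forall>B. (\<forall>c\<in>C0\<union>C1. sat B c) \<longleftrightarrow>
          (\<exists>B'. (\<forall>x. x\<notin>N \<longrightarrow> B' x = B x) \<and> (\<forall>c\<in>C0'\<union>C1'. sat B' c)))"
  using assms
proof cases
  case (R1 c e x1 x2)
  note f1 = fresh_D[OF R1(5)] and f2 = fresh_D[OF R1(6)]
  have ve: "x1 \<notin> vars_e e" "x2 \<notin> vars_e e"
    using vars_cfill[of "Next e" c] f1 f2 R1(4) by auto
  show ?thesis
  proof (intro exI[of _ "{x1,x2}"] conjI allI iffI)
    show "Y' = Y \<union> {x1, x2}" using R1(3) by simp
    show "{x1, x2} \<inter> X = {}" using f1 f2 by auto
  next
    fix B assume H: "\<forall>c\<in>C0\<union>C1. sat B c"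
    define B' where "B' = B(x2 := eval B e, x1 := (\<lambda>i. eval B e (Suc i)))"
    have ag: "sat B' d = sat B d" if "d \<in> C0 \<union> C1" for d
      by (rule sat_cong) (use that f1 f2 in \<open>auto simp: B'_def\<close>)
    have eve: "eval B' e = eval B e"
      by (rule eval_cong) (use ve in \<open>auto simp: B'_def\<close>)
    have "eval B' (Var x1) = eval B' (Next e)" using eve R1(7) by (auto simp: B'_def)
    hence s1: "sat B' (cfill c (Var x1)) = sat B' (cfill c (Next e))" by (rule cfill_sat)
    show "\<exists>B'. (\<forall>x. x \<notin> {x1, x2} \<longrightarrow> B' x = B x) \<and> (\<forall>c\<in>C0' \<union> C1'. sat B' c)"
    proof (intro exI[of _ B'] conjI)
      show "\<forall>x. x \<notin> {x1, x2} \<longrightarrow> B' x = B x" by (auto simp: B'_def)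
      have e1: "sat B' (Rel Eq (Var x2) e)" using eve R1(7) by (simp add: B'_def)
      have e2: "sat B' (Rel Eq (Var x1) (Next (Var x2)))" using R1(7) by (simp add: B'_def)
      have m: "cfill c (Next e) \<in> C0 \<union> C1" using R1(4) by simp
      have e3: "sat B' (cfill c (Var x1))" using s1 ag[OF m] bspec[OF H m] by simp
      have e4: "sat B' d" if "d \<in> C0 \<union> C1" for d using ag[OF that] bspec[OF H that] by simp
      show "\<forall>c\<in>C0' \<union> C1'. sat B' c"
        unfolding R1(1,2) using e1 e2 e3 e4 by blast
    qed
  next
    fix B assume "\<exists>B'. (\<forall>x. x \<notin> {x1, x2} \<longrightarrow> B' x = B x) \<and> (\<forall>c\<in>C0' \<union> C1'. sat B' c)"
    then obtain B' where e: "\<forall>x. x \<notin> {x1, x2} \<longrightarrow> B' x = B x" and S: "\<forall>c\<in>C0' \<union> C1'. sat B' c" by blast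
    have ag: "sat B' d = sat B d" if "d \<in> C0 \<union> C1" for d
      by (rule sat_cong) (use that f1 f2 e in auto)
    have r1: "sat B' (Rel Eq (Var x2) e)" "sat B' (Rel Eq (Var x1) (Next (Var x2)))"
      using S unfolding R1(1,2) by blast+
    have a: "\<forall>i. B' x2 i = eval B' e i" and b: "\<forall>i. B' x1 i = B' x2 (Suc i)"
      using r1 by auto
    have "eval B' (Var x1) = eval B' (Next e)" using a b by auto
    hence s1: "sat B' (cfill c (Var x1)) = sat B' (cfill c (Next e))" by (rule cfill_sat)
    show "\<forall>c\<in>C0 \<union> C1. sat B c"
    proof
      fix d assume d: "d \<in> C0 \<union> C1"
      show "sat B d"
      proof (cases "d = cfill c (Next e)")
        case True
        have m1: "cfill c (Var x1) \<in> C0' \<union> C1'" by (simp add: R1(1))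
        show ?thesis using ag[OF d] s1 bspec[OF S m1] True by simp
      next
        case False
        have m1: "d \<in> C0' \<union> C1'" using d False R1(1,2) by auto
        show ?thesis using ag[OF d] bspec[OF S m1] by simp
      qed
    qed
  qed
next
  case (R2 c e1 e2 x1 x2 x3)
  note f1 = fresh_D[OF R2(5)] and f2 = fresh_D[OF R2(6)] and f3 = fresh_D[OF R2(7)]
  have ve: "x1 \<notin> vars_e e1" "x2 \<notin> vars_e e1" "x3 \<notin> vars_e e1"
     "x1 \<notin> vars_e e2" "x2 \<notin> vars_e e2" "x3 \<notin> vars_e e2"
    using vars_cfill[of "Fby e1 e2" c] f1 f2 f3 R2(4) by auto
  show ?thesis
  proof (intro exI[of _ "{x1,x2,x3}"] conjI allI iffI)
    show "Y' = Y \<union> {x1, x2, x3}" using R2(3) by simp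
    show "{x1, x2, x3} \<inter> X = {}" using f1 f2 f3 by auto
  next
    fix B assume H: "\<forall>c\<in>C0\<union>C1. sat B c"
    define B' where "B' = B(x3 := eval B e2, x2 := eval B e1, x1 := eval B (Fby e1 e2))"
    have ag: "sat B' d = sat B d" if "d \<in> C0 \<union> C1" for d
      by (rule sat_cong) (use that f1 f2 f3 in \<open>auto simp: B'_def\<close>)
    have eve1: "eval B' e1 = eval B e1"
      by (rule eval_cong) (use ve in \<open>auto simp: B'_def\<close>)
    have eve2: "eval B' e2 = eval B e2"
      by (rule eval_cong) (use ve in \<open>auto simp: B'_def\<close>)
    have "eval B' (Var x1) = eval B' (Fby e1 e2)" using eve1 eve2 R2 by (auto simp: B'_def)
    hence s1: "sat B' (cfill c (Var x1)) = sat B' (cfill c (Fby e1 e2))" by (rule cfill_sat)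
    show "\<exists>B'. (\<forall>x. x \<notin> {x1, x2, x3} \<longrightarrow> B' x = B x) \<and> (\<forall>c\<in>C0' \<union> C1'. sat B' c)"
    proof (intro exI[of _ B'] conjI)
      show "\<forall>x. x \<notin> {x1, x2, x3} \<longrightarrow> B' x = B x" by (auto simp: B'_def)
      have e1: "sat B' (Rel Eq (Var x2) e1)" using eve1 R2 by (simp add: B'_def)
      have e1': "sat B' (Rel Eq (Var x3) e2)" using eve2 R2 by (simp add: B'_def)
      have e2: "sat B' (Rel Eq (First (Var x1)) (First (Var x2)))" using R2 by (simp add: B'_def)
      have e2': "sat B' (Rel Eq (Var x3) (Next (Var x1)))" using R2 by (simp add: B'_def)
      have m: "cfill c (Fby e1 e2) \<in> C0 \<union> C1" using R2(4) by simp
      have e3: "sat B' (cfill c (Var x1))" using s1 ag[OF m] bspec[OF H m] by simp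
      have e4: "sat B' d" if "d \<in> C0 \<union> C1" for d using ag[OF that] bspec[OF H that] by simp
      show "\<forall>c\<in>C0' \<union> C1'. sat B' c"
        unfolding R2(1,2) using e1 e1' e2 e2' e3 e4 by blast
    qed
  next
    fix B assume "\<exists>B'. (\<forall>x. x \<notin> {x1, x2, x3} \<longrightarrow> B' x = B x) \<and> (\<forall>c\<in>C0' \<union> C1'. sat B' c)"
    then obtain B' where e: "\<forall>x. x \<notin> {x1, x2, x3} \<longrightarrow> B' x = B x" and S: "\<forall>c\<in>C0' \<union> C1'. sat B' c" by blast
    have ag: "sat B' d = sat B d" if "d \<in> C0 \<union> C1" for d
      by (rule sat_cong) (use that f1 f2 f3 e in auto)
    have r1: "sat B' (Rel Eq (Var x2) e1)" "sat B' (Rel Eq (Var x3) e2)"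
      "sat B' (Rel Eq (First (Var x1)) (First (Var x2)))" "sat B' (Rel Eq (Var x3) (Next (Var x1)))"
      using S unfolding R2(1,2) by blast+
    have a: "\<forall>i. B' x2 i = eval B' e1 i" and a3: "\<forall>i. B' x3 i = eval B' e2 i"
      and b: "B' x1 0 = B' x2 0" and b3: "\<forall>i. B' x3 i = B' x1 (Suc i)"
      using r1 by auto
    have "eval B' (Var x1) = eval B' (Fby e1 e2)"
    proof
      fix i show "eval B' (Var x1) i = eval B' (Fby e1 e2) i"
        using a a3 b b3 by (cases i) auto
    qed
    hence s1: "sat B' (cfill c (Var x1)) = sat B' (cfill c (Fby e1 e2))" by (rule cfill_sat)
    show "\<forall>c\<in>C0 \<union> C1. sat B c"
    proof
      fix d assume d: "d \<in> C0 \<union> C1"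
      show "sat B d"
      proof (cases "d = cfill c (Fby e1 e2)")
        case True
        have m1: "cfill c (Var x1) \<in> C0' \<union> C1'" by (simp add: R2(1))
        show ?thesis using ag[OF d] s1 bspec[OF S m1] True by simp
      next
        case False
        have m1: "d \<in> C0' \<union> C1'" using d False R2(1,2) by auto
        show ?thesis using ag[OF d] bspec[OF S m1] by simp
      qed
    qed
  qed
next
  case (R3 e1 e2 x1 x2)
  note f1 = fresh_D[OF R3(5)] and f2 = fresh_D[OF R3(6)]
  have ve: "x1 \<notin> vars_e e1" "x2 \<notin> vars_e e1" "x1 \<notin> vars_e e2" "x2 \<notin> vars_e e2"
    using f1 f2 R3(4) by force+
  show ?thesis
  proof (intro exI[of _ "{x1,x2}"] conjI allI iffI)
    show "Y' = Y \<union> {x1, x2}" using R3(3) by simp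
    show "{x1, x2} \<inter> X = {}" using f1 f2 by auto
  next
    fix B assume H: "\<forall>c\<in>C0\<union>C1. sat B c"
    define B' where "B' = B(x2 := eval B e2, x1 := eval B e1)"
    have ag: "sat B' d = sat B d" if "d \<in> C0 \<union> C1" for d
      by (rule sat_cong) (use that f1 f2 in \<open>auto simp: B'_def\<close>)
    have eve1: "eval B' e1 = eval B e1"
      by (rule eval_cong) (use ve in \<open>auto simp: B'_def\<close>)
    have eve2: "eval B' e2 = eval B e2"
      by (rule eval_cong) (use ve in \<open>auto simp: B'_def\<close>)
    have mU: "Until e1 e2 \<in> C0 \<union> C1" using R3(4) by simp
    have U: "sat B (Until e1 e2)" using bspec[OF H mU] .
    show "\<exists>B'. (\<forall>x. x \<notin> {x1, x2} \<longrightarrow> B' x = B x) \<and> (\<forall>c\<in>C0' \<union> C1'. sat B' c)"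
    proof (intro exI[of _ B'] conjI)
      show "\<forall>x. x \<notin> {x1, x2} \<longrightarrow> B' x = B x" by (auto simp: B'_def)
      have e1: "sat B' (Rel Eq (Var x1) e1)" using eve1 R3 by (simp add: B'_def)
      have e1': "sat B' (Rel Eq (Var x2) e2)" using eve2 R3 by (simp add: B'_def)
      have v1: "B' x1 = eval B e1" "B' x2 = eval B e2" using R3(7) by (auto simp: B'_def)
      have e2: "sat B' (Until (Var x1) (Var x2))" using U by (simp only: sat.simps eval.simps v1)
      have e4: "sat B' d" if "d \<in> C0 \<union> C1" for d using ag[OF that] bspec[OF H that] by simp
      show "\<forall>c\<in>C0' \<union> C1'. sat B' c"
        unfolding R3(1,2) using e1 e1' e2 e4 by blast
    qed
  next
    fix B assume "\<exists>B'. (\<forall>x. x \<notin> {x1, x2} \<longrightarrow> B' x = B x) \<and> (\<forall>c\<in>C0' \<union> C1'. sat B' c)"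
    then obtain B' where e: "\<forall>x. x \<notin> {x1, x2} \<longrightarrow> B' x = B x" and S: "\<forall>c\<in>C0' \<union> C1'. sat B' c" by blast
    have ag: "sat B' d = sat B d" if "d \<in> C0 \<union> C1" for d
      by (rule sat_cong) (use that f1 f2 e in auto)
    have r1: "sat B' (Rel Eq (Var x1) e1)" "sat B' (Rel Eq (Var x2) e2)"
      using S unfolding R3(1,2) by blast+
    have a: "B' x1 = eval B' e1" and a2: "B' x2 = eval B' e2"
      using r1 by (auto simp: fun_eq_iff)
    have U: "sat B' (Until (Var x1) (Var x2))" using S unfolding R3(1,2) by blast
    hence s1: "sat B' (Until e1 e2)" by (simp only: sat.simps eval.simps a a2)
    show "\<forall>c\<in>C0 \<union> C1. sat B c"
    proof
      fix d assume d: "d \<in> C0 \<union> C1"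
      show "sat B d"
      proof (cases "d = Until e1 e2")
        case True thus ?thesis using ag[OF d] s1 by simp
      next
        case False
        have m1: "d \<in> C0' \<union> C1'" using d False R3(1,2) by auto
        show ?thesis using ag[OF d] bspec[OF S m1] by simp
      qed
    qed
  qed
qed

lemma invariant0:
  assumes "(rw_step X)\<^sup>*\<^sup>* (C, {}, {}) s"
  shows "case s of (C0, C1, Y) \<Rightarrow> Y \<inter> X = {} \<and> (\<forall>A. (\<forall>c\<in>C. sat A c) \<longleftrightarrow>
           (\<exists>B. (\<forall>x. x \<notin> Y \<longrightarrow> B x = A x) \<and> (\<forall>c\<in>C0 \<union> C1. sat B c)))"
  using assms
proof (induction rule: rtranclp_induct)
  case base
  then show ?case by (auto simp flip: fun_eq_iff)
next
  case (step z s')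
  obtain C0 C1 Y where z: "z = (C0, C1, Y)" by (cases z) auto
  obtain C0' C1' Y' where s': "s' = (C0', C1', Y')" by (cases s') auto
  have IH: "Y \<inter> X = {}" "\<And>A. (\<forall>c\<in>C. sat A c) \<longleftrightarrow>
           (\<exists>B. (\<forall>x. x \<notin> Y \<longrightarrow> B x = A x) \<and> (\<forall>c\<in>C0 \<union> C1. sat B c))"
    using step.IH[unfolded z prod.case] by blast+
  obtain N where N: "Y' = Y \<union> N" "N \<inter> X = {}" and
    St: "\<And>B. (\<forall>c\<in>C0\<union>C1. sat B c) \<longleftrightarrow>
          (\<exists>B'. (\<forall>x. x\<notin>N \<longrightarrow> B' x = B x) \<and> (\<forall>c\<in>C0'\<union>C1'. sat B' c))"
    using rw_step_inv[OF step.hyps(2)[unfolded z s']] by blast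
  show ?case unfolding s' prod.case
  proof (intro conjI allI iffI)
    show "Y' \<inter> X = {}" using N IH by auto
  next
    fix A assume "\<forall>c\<in>C. sat A c"
    then obtain B where B: "\<forall>x. x \<notin> Y \<longrightarrow> B x = A x" "\<forall>c\<in>C0 \<union> C1. sat B c"
      using IH(2) by blast
    then obtain B' where "\<forall>x. x\<notin>N \<longrightarrow> B' x = B x" "\<forall>c\<in>C0'\<union>C1'. sat B' c"
      using St[of B] B(2) by blast
    then show "\<exists>B. (\<forall>x. x \<notin> Y' \<longrightarrow> B x = A x) \<and> (\<forall>c\<in>C0' \<union> C1'. sat B c)"
      using B N by (intro exI[of _ B']) auto
  next
    fix A assume "\<exists>B. (\<forall>x. x \<notin> Y' \<longrightarrow> B x = A x) \<and> (\<forall>c\<in>C0' \<union> C1'. sat B c)"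
    then obtain B' where B': "\<forall>x. x \<notin> Y' \<longrightarrow> B' x = A x" "\<forall>c\<in>C0' \<union> C1'. sat B' c" by blast
    define B where "B = (\<lambda>x. if x \<in> N then A x else B' x)"
    have "\<forall>x. x\<notin>N \<longrightarrow> B' x = B x" by (auto simp: B_def)
    hence "\<forall>c\<in>C0\<union>C1. sat B c" using St[of B] B'(2) by blast
    moreover have "\<forall>x. x \<notin> Y \<longrightarrow> B x = A x" using B'(1) N(1) by (auto simp: B_def)
    ultimately show "\<forall>c\<in>C. sat A c" using IH(2) by blast
  qed
qed

lemma invariant:
  assumes "(rw_step X)\<^sup>*\<^sup>* (C, {}, {}) (C0, C1, Y)"
  shows "Y \<inter> X = {} \<and> (\<forall>A. (\<forall>c\<in>C. sat A c) \<longleftrightarrow>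
           (\<exists>B. (\<forall>x. x \<notin> Y \<longrightarrow> B x = A x) \<and> (\<forall>c\<in>C0 \<union> C1. sat B c)))"
  using invariant0[OF assms] by simp

lemma dom_lemma: "is_sol (X \<union> Y) (\<lambda>x. if x \<in> X then Sg x else UNIV) S B \<longleftrightarrow>
      in_domain X Sg B \<and> (\<forall>c\<in>S. sat B c)"
  unfolding is_sol_def in_domain_def by auto

lemma satX_lemma:
  assumes "vars_cs C \<subseteq> X" "\<forall>x\<in>X. B x = A x"
  shows "(\<forall>c\<in>C. sat A c) \<longleftrightarrow> (\<forall>c\<in>C. sat B c)"
proof -
  have "sat A c = sat B c" if "c \<in> C" for c
  proof (rule sat_cong)
    show "\<forall>x\<in>vars_c c. A x = B x" using that assms unfolding vars_cs_def by auto
  qed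
  thus ?thesis by blast
qed

lemma dom_agree: "\<forall>x\<in>X. B x = A x \<Longrightarrow> in_domain X Sg A \<longleftrightarrow> in_domain X Sg B"
  unfolding in_domain_def by simp

theorem proposition3:
  fixes X :: "'v set" and Sg :: "'v \<Rightarrow> int set" and C C0 C1 :: "'v sconstr set"
    and Y :: "'v set"
  assumes "finite X" and "\<forall>x\<in>X. finite (Sg x)"
    and "finite C" and "vars_cs C \<subseteq> X"
    and "(rw_step X)\<^sup>*\<^sup>* (C, {}, {}) (C0, C1, Y)"
  shows "is_sol X Sg C A \<longleftrightarrow>
           (\<exists>B. (\<forall>x\<in>X. B x = A x) \<and> is_sol (X \<union> Y) (\<lambda>x. if x \<in> X then Sg x else UNIV) (C0 \<union> C1) B)"
proof -
  have YX: "Y \<inter> X = {}" and I: "\<And>A. (\<forall>c\<in>C. sat A c) \<longleftrightarrow>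
           (\<exists>B. (\<forall>x. x \<notin> Y \<longrightarrow> B x = A x) \<and> (\<forall>c\<in>C0 \<union> C1. sat B c))"
    using invariant[OF assms(5)] by blast+
  show ?thesis
  proof
    assume "is_sol X Sg C A"
    hence D: "in_domain X Sg A" and S: "\<forall>c\<in>C. sat A c" unfolding is_sol_def by blast+
    obtain B where B: "\<forall>x. x \<notin> Y \<longrightarrow> B x = A x" "\<forall>c\<in>C0 \<union> C1. sat B c"
      using I[of A] S by blast
    have ag: "\<forall>x\<in>X. B x = A x" using B(1) YX by blast
    have "in_domain X Sg B" using D dom_agree[OF ag] by blast
    hence "is_sol (X \<union> Y) (\<lambda>x. if x \<in> X then Sg x else UNIV) (C0 \<union> C1) B"
      using B(2) dom_lemma by blast
    thus "\<exists>B. (\<forall>x\<in>X. B x = A x) \<and> is_sol (X \<union> Y) (\<lambda>x. if x \<in> X then Sg x else UNIV) (C0 \<union> C1) B"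
      using ag by blast
  next
    assume "\<exists>B. (\<forall>x\<in>X. B x = A x) \<and> is_sol (X \<union> Y) (\<lambda>x. if x \<in> X then Sg x else UNIV) (C0 \<union> C1) B"
    then obtain B where B1: "\<forall>x\<in>X. B x = A x"
      and B2: "is_sol (X \<union> Y) (\<lambda>x. if x \<in> X then Sg x else UNIV) (C0 \<union> C1) B" by blast
    have D: "in_domain X Sg B" and S: "\<forall>c\<in>C0 \<union> C1. sat B c" using B2 dom_lemma by blast+
    have "\<forall>c\<in>C. sat B c" using I[of B] S by blast
    hence "\<forall>c\<in>C. sat A c" using satX_lemma[OF assms(4) B1] by blast
    moreover have "in_domain X Sg A" using D dom_agree[OF B1] by blast
    ultimately show "is_sol X Sg C A" unfolding is_sol_def by blast
  qed
qed

end
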